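(* There is a function $C_5(t)$ such that for every positive integer $t$ the following holds: every connected bipartite graph $G$ with $\delta(G)\geq C_5(t)$ which is induced $S_{t,t}$-free has diameter at most $5$.
   Context: For positive integers $a,b$, the biclaw $S_{a,b}$ is the graph with vertex set $\{x,x_1,\dots,x_a,y,y_1,\dots,y_b\}$ and edges $xy$, $xy_1,\dots,xy_b$, $yx_1,\dots,yx_a$. Induced $S_{t,t}$-free means no induced subgraph isomorphic to $S_{t,t}$. $\delta(G)$ is the minimum degree. *)

theory Defs
  imports Main
begin

definition simple_graph :: "'a set \<Rightarrow> ('a \<Rightarrow> 'a \<Rightarrow> bool) \<Rightarrow> bool" where
  "simple_graph V E \<longleftrightarrow> finite V \<and> (\<forall>u v. E u v \<longrightarrow> u \<in> V \<and> v \<in> V)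
     \<and> (\<forall>u v. E u v \<longrightarrow> E v u) \<and> (\<forall>v. \<not> E v v)"

definition degree :: "'a set \<Rightarrow> ('a \<Rightarrow> 'a \<Rightarrow> bool) \<Rightarrow> 'a \<Rightarrow> nat" where
  "degree V E v = card {u \<in> V. E v u}"

definition min_degree_ge :: "'a set \<Rightarrow> ('a \<Rightarrow> 'a \<Rightarrow> bool) \<Rightarrow> nat \<Rightarrow> bool" where
  "min_degree_ge V E k \<longleftrightarrow> (\<forall>v\<in>V. k \<le> degree V E v)"

text \<open>A walk of length (length ps - 1) from u to v.\<close>
definition is_walk :: "('a \<Rightarrow> 'a \<Rightarrow> bool) \<Rightarrow> 'a list \<Rightarrow> 'a \<Rightarrow> 'a \<Rightarrow> bool" where
  "is_walk E ps u v \<longleftrightarrow> ps \<noteq> [] \<and> hd ps = u \<and> last ps = v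
     \<and> (\<forall>i. Suc i < length ps \<longrightarrow> E (ps ! i) (ps ! Suc i))"

definition connected_graph :: "'a set \<Rightarrow> ('a \<Rightarrow> 'a \<Rightarrow> bool) \<Rightarrow> bool" where
  "connected_graph V E \<longleftrightarrow> V \<noteq> {} \<and> (\<forall>u\<in>V. \<forall>v\<in>V. \<exists>ps. is_walk E ps u v)"

definition bipartite :: "'a set \<Rightarrow> ('a \<Rightarrow> 'a \<Rightarrow> bool) \<Rightarrow> bool" where
  "bipartite V E \<longleftrightarrow> (\<exists>A \<subseteq> V. \<forall>u v. E u v \<longrightarrow> (u \<in> A \<longleftrightarrow> v \<notin> A))"

definition diameter_le :: "'a set \<Rightarrow> ('a \<Rightarrow> 'a \<Rightarrow> bool) \<Rightarrow> nat \<Rightarrow> bool" where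
  "diameter_le V E d \<longleftrightarrow> (\<forall>u\<in>V. \<forall>v\<in>V. \<exists>ps. is_walk E ps u v \<and> length ps \<le> Suc d)"

text \<open>Biclaw S_{a,b}: vertices x, y, x_1..x_a (BXi 0..a-1), y_1..y_b (BYi 0..b-1).\<close>
datatype bcv = BX | BY | BXi nat | BYi nat

definition biclaw_V :: "nat \<Rightarrow> nat \<Rightarrow> bcv set" where
  "biclaw_V a b = {BX, BY} \<union> BXi ` {..<a} \<union> BYi ` {..<b}"

fun biclaw_E0 :: "bcv \<Rightarrow> bcv \<Rightarrow> bool" where
  "biclaw_E0 BX BY = True"
| "biclaw_E0 BX (BYi _) = True"
| "biclaw_E0 BY (BXi _) = True"
| "biclaw_E0 _ _ = False"

definition biclaw_E :: "bcv \<Rightarrow> bcv \<Rightarrow> bool" where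
  "biclaw_E u v \<longleftrightarrow> biclaw_E0 u v \<or> biclaw_E0 v u"

definition induced_subgraph_of :: "'b set \<Rightarrow> ('b \<Rightarrow> 'b \<Rightarrow> bool) \<Rightarrow> 'a set \<Rightarrow> ('a \<Rightarrow> 'a \<Rightarrow> bool) \<Rightarrow> bool" where
  "induced_subgraph_of HV HE V E \<longleftrightarrow> (\<exists>f. inj_on f HV \<and> f ` HV \<subseteq> V
     \<and> (\<forall>u\<in>HV. \<forall>v\<in>HV. E (f u) (f v) \<longleftrightarrow> HE u v))"

definition induced_biclaw_free :: "nat \<Rightarrow> 'a set \<Rightarrow> ('a \<Rightarrow> 'a \<Rightarrow> bool) \<Rightarrow> bool" where
  "induced_biclaw_free t V E \<longleftrightarrow> \<not> induced_subgraph_of (biclaw_V t t) biclaw_E V E"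

end

theory Submission
  imports Defs
begin

inductive rch :: "('a \<Rightarrow> 'a \<Rightarrow> bool) \<Rightarrow> nat \<Rightarrow> 'a \<Rightarrow> 'a \<Rightarrow> bool" for E where
  rch0: "rch E 0 u u"
| rchS: "E u x \<Longrightarrow> rch E n x v \<Longrightarrow> rch E (Suc n) u v"

lemma rch_app: "rch E n u x \<Longrightarrow> E x y \<Longrightarrow> rch E (Suc n) u y"
  by (induction rule: rch.induct) (auto intro: rch.intros)

lemma rch_sym: assumes sy: "\<And>a b. E a b \<Longrightarrow> E b a" shows "rch E n u v \<Longrightarrow> rch E n v u"
proof (induction rule: rch.induct)
  case (rch0 u) then show ?case by (rule rch.rch0)
next
  case (rchS u x n v) then show ?case by (auto intro: rch_app sy)
qed

lemma rch_trans: "rch E m u v \<Longrightarrow> rch E n v z \<Longrightarrow> rch E (m+n) u z"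
  by (induction rule: rch.induct) (auto intro: rch.intros)

lemma rch_walk: "rch E n u v \<Longrightarrow> \<exists>ps. is_walk E ps u v \<and> length ps = Suc n"
proof (induction rule: rch.induct)
  case (rch0 u) then show ?case by (intro exI[of _ "[u]"]) (simp add: is_walk_def)
next
  case (rchS u x n v)
  then obtain ps where ps: "is_walk E ps x v" "length ps = Suc n" by blast
  have "is_walk E (u # ps) u v"
    unfolding is_walk_def
  proof (intro conjI allI impI)
    fix i assume i: "Suc i < length (u # ps)"
    show "E ((u # ps) ! i) ((u # ps) ! Suc i)"
    proof (cases i)
      case 0 then show ?thesis using ps rchS(1) by (cases ps) (auto simp: is_walk_def)
    next
      case (Suc j) then show ?thesis using ps i by (auto simp: is_walk_def)
    qed
  qed (use ps in \<open>auto simp: is_walk_def\<close>)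
  then show ?case using ps by (intro exI[of _ "u # ps"]) simp
qed

lemma walk_rch: "is_walk E ps u v \<Longrightarrow> rch E (length ps - 1) u v"
proof (induction ps arbitrary: u)
  case Nil then show ?case by (simp add: is_walk_def)
next
  case (Cons a ps)
  show ?case
  proof (cases ps)
    case Nil then show ?thesis using Cons.prems by (auto simp: is_walk_def intro: rch.intros)
  next
    case (Cons b qs)
    have w: "is_walk E ps b v" unfolding is_walk_def
    proof (intro conjI allI impI)
      fix i assume "Suc i < length ps"
      then have "Suc (Suc i) < length (a # ps)" by simp
      then have "E ((a # ps) ! Suc i) ((a # ps) ! Suc (Suc i))" using Cons.prems unfolding is_walk_def by blast
      then show "E (ps ! i) (ps ! Suc i)" by simp
    qed (use Cons.prems Cons in \<open>auto simp: is_walk_def\<close>)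
    have e1: "E ((a#ps) ! 0) ((a#ps) ! Suc 0)" using Cons.prems Cons unfolding is_walk_def by auto
    have e: "E a b" "a = u" using e1 Cons Cons.prems by (auto simp: is_walk_def)
    have "rch E (length ps - 1) b v" using Cons.IH w by blast
    then have "rch E (Suc (length ps - 1)) a v" using e by (auto intro: rch.intros)
    then show ?thesis using e Cons by simp
  qed
qed

lemma rch_parity: assumes bp: "\<And>a b. E a b \<Longrightarrow> (a \<in> A \<longleftrightarrow> b \<notin> A)" shows "rch E n u v \<Longrightarrow> ((u \<in> A \<longleftrightarrow> v \<in> A) \<longleftrightarrow> even n)"
  by (induction rule: rch.induct) (auto dest: bp)

definition gdist :: "('a \<Rightarrow> 'a \<Rightarrow> bool) \<Rightarrow> 'a \<Rightarrow> 'a \<Rightarrow> nat" where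
  "gdist E u v = (LEAST n. rch E n u v)"


locale bg =
  fixes V :: "'a set" and E :: "'a \<Rightarrow> 'a \<Rightarrow> bool" and A :: "'a set" and t :: nat and C :: nat
  assumes sg: "simple_graph V E"
  and bip: "\<And>a b. E a b \<Longrightarrow> (a \<in> A \<longleftrightarrow> b \<notin> A)"
  and deg: "\<And>v. v \<in> V \<Longrightarrow> C \<le> card {a\<in>V. E v a}"
  and free: "\<not> induced_subgraph_of (biclaw_V t t) biclaw_E V E"
  and conn: "\<And>a b. a \<in> V \<Longrightarrow> b \<in> V \<Longrightarrow> \<exists>n. rch E n a b"
  and tpos: "1 \<le> t"
  and Cbig: "3*t*t + 3 \<le> C"
begin

abbreviation N :: "'a \<Rightarrow> 'a set" where "N z \<equiv> {a\<in>V. E z a}"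
abbreviation d :: "'a \<Rightarrow> 'a \<Rightarrow> nat" where "d r z \<equiv> gdist E r z"
abbreviation Dn :: "'a \<Rightarrow> 'a \<Rightarrow> 'a set" where "Dn r z \<equiv> {a \<in> N z. Suc (d r a) = d r z}"
abbreviation Up :: "'a \<Rightarrow> 'a \<Rightarrow> 'a set" where "Up r z \<equiv> {a \<in> N z. d r a = Suc (d r z)}"

lemma finV: "finite V" using sg by (simp add: simple_graph_def)
lemma eV1: "E a b \<Longrightarrow> a \<in> V" using sg by (simp add: simple_graph_def)
lemma eV2: "E a b \<Longrightarrow> b \<in> V" using sg by (simp add: simple_graph_def)
lemma esym: "E a b \<Longrightarrow> E b a" using sg by (simp add: simple_graph_def)
lemma irr: "\<not> E a a" using sg by (simp add: simple_graph_def)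
lemma finN: "finite (N z)" using finV by simp
lemma finS: "S \<subseteq> V \<Longrightarrow> finite S" using finV finite_subset by blast

lemma L_rch: "r \<in> V \<Longrightarrow> z \<in> V \<Longrightarrow> rch E (d r z) r z"
proof -
  assume "r \<in> V" "z \<in> V"
  then obtain n where "rch E n r z" using conn by blast
  then show ?thesis unfolding gdist_def by (rule LeastI)
qed
lemma L_le: "rch E n r z \<Longrightarrow> d r z \<le> n"
  unfolding gdist_def by (rule Least_le)

lemma L_adj1: "r \<in> V \<Longrightarrow> E a b \<Longrightarrow> d r b \<le> Suc (d r a)"
proof -
  assume "r \<in> V" "E a b"
  then have "rch E (Suc (d r a)) r b" using rch_app[OF L_rch[OF _ eV1]] by blast
  then show ?thesis by (rule L_le)
qed

lemma L_adj: assumes r: "r \<in> V" and e: "E a b" shows "d r b = Suc (d r a) \<or> d r a = Suc (d r b)"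
proof -
  have 1: "d r b \<le> Suc (d r a)" using L_adj1 r e by blast
  have 2: "d r a \<le> Suc (d r b)" using L_adj1 r esym[OF e] by blast
  have pa: "((r \<in> A \<longleftrightarrow> a \<in> A) \<longleftrightarrow> even (d r a))" using rch_parity[OF bip L_rch[OF r eV1[OF e]]] by blast
  have pb: "((r \<in> A \<longleftrightarrow> b \<in> A) \<longleftrightarrow> even (d r b))" using rch_parity[OF bip L_rch[OF r eV2[OF e]]] by blast
  have "d r a \<noteq> d r b" using pa pb bip[OF e] by (metis (full_types))
  then show ?thesis using 1 2 by linarith
qed

lemma L_self: "d r r = 0" using L_le[OF rch.rch0[of E r]] by simp

lemma L_zero: assumes "r \<in> V" "z \<in> V" "d r z = 0" shows "z = r"
proof -
  have "rch E 0 r z" using L_rch[OF assms(1,2)] assms(3) by simp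
  then show ?thesis by (cases rule: rch.cases) auto
qed

lemma L_sym_rch: "rch E n a b \<Longrightarrow> rch E n b a" by (rule rch_sym[of E, OF esym])

lemma L_sym: assumes "a \<in> V" "b \<in> V" shows "d a b = d b a"
proof -
  have "d b a \<le> d a b" using L_le[OF L_sym_rch[OF L_rch[OF assms]]] .
  moreover have "d a b \<le> d b a" using L_le[OF L_sym_rch[OF L_rch[OF assms(2,1)]]] .
  ultimately show ?thesis by simp
qed

lemma L_pred: assumes r: "r \<in> V" and z: "z \<in> V" and dz: "d r z = Suc n"
  shows "\<exists>x. x \<in> N z \<and> d r x = n"
proof -
  have "rch E (Suc n) z r" using L_sym_rch L_rch[OF r z] dz by simp
  then obtain x where x: "E z x" "rch E n x r" by (cases rule: rch.cases) auto
  have "d r x \<le> n" using L_le[OF L_sym_rch[OF x(2)]] .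
  moreover have "d r z \<le> Suc (d r x)" using L_adj1[OF r esym[OF x(1)]] .
  ultimately have "d r x = n" using dz by simp
  then show ?thesis using x eV2 by blast
qed

lemma L_tri: assumes "r \<in> V" "a \<in> V" "z \<in> V" shows "d r z \<le> d r a + d a z"
  using L_le[OF rch_trans[OF L_rch[OF assms(1,2)] L_rch[OF assms(2,3)]]] .

lemma L_split: assumes r: "r \<in> V" and z: "z \<in> V" shows "C \<le> card (Dn r z) + card (Up r z)"
proof -
  have "N z \<subseteq> Dn r z \<union> Up r z"
  proof
    fix a assume a: "a \<in> N z"
    then have "d r a = Suc (d r z) \<or> d r z = Suc (d r a)" using L_adj[OF r, of z a] by simp
    then show "a \<in> Dn r z \<union> Up r z" using a by auto
  qed
  then have "card (N z) \<le> card (Dn r z \<union> Up r z)" by (intro card_mono) (use finV in auto)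
  also have "\<dots> \<le> card (Dn r z) + card (Up r z)" by (rule card_Un_le)
  finally have "card (N z) \<le> card (Dn r z) + card (Up r z)" .
  then show ?thesis using deg[OF z] by simp
qed

lemma L_desc: assumes r: "r \<in> V" shows "z \<in> V \<Longrightarrow> d r z = m + k \<Longrightarrow> \<exists>y\<in>V. d r y = m \<and> rch E k y z"
proof (induction k arbitrary: z)
  case 0 then show ?case by (auto intro: rch.intros)
next
  case (Suc k)
  obtain x where x: "x \<in> N z" "d r x = m + k" using L_pred[OF r Suc.prems(1)] Suc.prems(2) by auto
  obtain y where y: "y \<in> V" "d r y = m" "rch E k y x" using Suc.IH x by blast
  have "rch E (Suc k) y z" using rch_app[OF y(3)] esym x(1) by auto
  then show ?case using y by auto
qed

end

context bg
begin

lemma side_nonadj: assumes "a \<in> N y" "b \<in> N y" shows "\<not> E a b"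
proof
  assume h: "E a b"
  show False using assms bip[OF h] bip[of y a] bip[of y b] by auto
qed

lemma AC: assumes e: "E x y" and X: "X \<subseteq> N y - {x}" and Y: "Y \<subseteq> N x - {y}"
  and anti: "\<forall>a\<in>X. \<forall>b\<in>Y. \<not> E a b"
  shows "card X < t \<or> card Y < t"
proof (rule ccontr)
  assume "\<not> (card X < t \<or> card Y < t)"
  then have cX: "t \<le> card X" and cY: "t \<le> card Y" by auto
  obtain X' where X': "X' \<subseteq> X" "card X' = t" "finite X'" using obtain_subset_with_card_n[OF cX] by blast
  obtain Y' where Y': "Y' \<subseteq> Y" "card Y' = t" "finite Y'" using obtain_subset_with_card_n[OF cY] by blast
  obtain xs where xs: "set xs = X'" "distinct xs" using finite_distinct_list[OF X'(3)] by blast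
  obtain ys where ys: "set ys = Y'" "distinct ys" using finite_distinct_list[OF Y'(3)] by blast
  have lx: "length xs = t" using xs X' distinct_card[OF xs(2)] by simp
  have ly: "length ys = t" using ys Y' distinct_card[OF ys(2)] by simp
  have xin: "\<And>i. i < t \<Longrightarrow> xs ! i \<in> X"
  proof -
    fix i assume "i < t" then have "xs ! i \<in> set xs" using lx by simp
    then show "xs ! i \<in> X" using xs(1) X'(1) by blast
  qed
  have yin: "\<And>i. i < t \<Longrightarrow> ys ! i \<in> Y"
  proof -
    fix i assume "i < t" then have "ys ! i \<in> set ys" using ly by simp
    then show "ys ! i \<in> Y" using ys(1) Y'(1) by blast
  qed
  define f where "f = (\<lambda>v. case v of BX \<Rightarrow> x | BY \<Rightarrow> y | BXi i \<Rightarrow> xs ! i | BYi i \<Rightarrow> ys ! i)"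
  have ex: "\<And>i. i < t \<Longrightarrow> E y (xs ! i)" using xin X by blast
  have ey: "\<And>i. i < t \<Longrightarrow> E x (ys ! i)" using yin Y by blast
  have nx: "\<And>i. i < t \<Longrightarrow> xs ! i \<noteq> x" using xin X by blast
  have ny: "\<And>i. i < t \<Longrightarrow> ys ! i \<noteq> y" using yin Y by blast
  have sx: "\<And>i. i < t \<Longrightarrow> (xs ! i \<in> A \<longleftrightarrow> x \<in> A)"
  proof -
    fix i assume i: "i < t"
    show "(xs ! i \<in> A \<longleftrightarrow> x \<in> A)" using bip[OF ex[OF i]] bip[OF e] by blast
  qed
  have sy: "\<And>i. i < t \<Longrightarrow> (ys ! i \<in> A \<longleftrightarrow> y \<in> A)"
  proof -
    fix i assume i: "i < t"
    show "(ys ! i \<in> A \<longleftrightarrow> y \<in> A)" using bip[OF ey[OF i]] bip[OF e] by blast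
  qed
  have sxy: "x \<in> A \<longleftrightarrow> y \<notin> A" using bip e by blast
  have nxx: "\<And>i j. i < t \<Longrightarrow> j < t \<Longrightarrow> \<not> E (xs ! i) (xs ! j)"
  proof
    fix i j assume i: "i < t" and j: "j < t" and h: "E (xs ! i) (xs ! j)"
    show False using bip[OF h] sx[OF i] sx[OF j] by blast
  qed
  have nyy: "\<And>i j. i < t \<Longrightarrow> j < t \<Longrightarrow> \<not> E (ys ! i) (ys ! j)"
  proof
    fix i j assume i: "i < t" and j: "j < t" and h: "E (ys ! i) (ys ! j)"
    show False using bip[OF h] sy[OF i] sy[OF j] by blast
  qed
  have nxy: "\<And>i j. i < t \<Longrightarrow> j < t \<Longrightarrow> \<not> E (xs ! i) (ys ! j)" using anti xin yin by blast
  have nyx: "\<And>i j. i < t \<Longrightarrow> j < t \<Longrightarrow> \<not> E (ys ! j) (xs ! i)" using nxy esym by blast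
  have nxX: "\<And>i. i < t \<Longrightarrow> \<not> E x (xs ! i) \<and> \<not> E (xs ! i) x"
  proof -
    fix i assume i: "i < t"
    show "\<not> E x (xs ! i) \<and> \<not> E (xs ! i) x" using sx[OF i] bip[of x "xs ! i"] bip[of "xs ! i" x] by blast
  qed
  have nyY: "\<And>i. i < t \<Longrightarrow> \<not> E y (ys ! i) \<and> \<not> E (ys ! i) y"
  proof -
    fix i assume i: "i < t"
    show "\<not> E y (ys ! i) \<and> \<not> E (ys ! i) y" using sy[OF i] bip[of y "ys ! i"] bip[of "ys ! i" y] by blast
  qed
  have dxy: "\<And>i j. i < t \<Longrightarrow> j < t \<Longrightarrow> xs ! i \<noteq> ys ! j"
  proof
    fix i j assume i: "i < t" and j: "j < t" and h: "xs ! i = ys ! j"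
    show False using sx[OF i] sy[OF j] sxy h by auto
  qed
  have dxY: "\<And>i. i < t \<Longrightarrow> xs ! i \<noteq> y" using sx sxy by blast
  have dyX: "\<And>i. i < t \<Longrightarrow> ys ! i \<noteq> x" using sy sxy by blast
  have xy: "x \<noteq> y" using e irr by blast
  have bv: "\<And>v. v \<in> biclaw_V t t \<longleftrightarrow> v = BX \<or> v = BY \<or> (\<exists>i<t. v = BXi i) \<or> (\<exists>i<t. v = BYi i)"
    unfolding biclaw_V_def by auto
  have inj: "inj_on f (biclaw_V t t)"
  proof (rule inj_onI)
    fix a b assume a: "a \<in> biclaw_V t t" and b: "b \<in> biclaw_V t t" and fab: "f a = f b"
    have ix: "\<And>i j. i < t \<Longrightarrow> j < t \<Longrightarrow> xs ! i = xs ! j \<Longrightarrow> i = j"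
      using xs(2) lx nth_eq_iff_index_eq by blast
    have iy: "\<And>i j. i < t \<Longrightarrow> j < t \<Longrightarrow> ys ! i = ys ! j \<Longrightarrow> i = j"
      using ys(2) ly nth_eq_iff_index_eq by blast
    show "a = b"
      using a b unfolding bv
      apply (elim disjE exE conjE)
      using fab xy nx ny dxy dxY dyX ix iy
      by (simp_all add: f_def) (metis)+
  qed
  have img: "f ` biclaw_V t t \<subseteq> V"
  proof
    fix v assume "v \<in> f ` biclaw_V t t"
    then obtain a where a: "a \<in> biclaw_V t t" "v = f a" by blast
    then show "v \<in> V" using eV1[OF e] eV2[OF e] eV2[OF ex] eV2[OF ey] unfolding bv f_def by auto
  qed
  have edges: "\<forall>a\<in>biclaw_V t t. \<forall>b\<in>biclaw_V t t. E (f a) (f b) \<longleftrightarrow> biclaw_E a b"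
  proof (intro ballI)
    fix a b assume a: "a \<in> biclaw_V t t" and b: "b \<in> biclaw_V t t"
    show "E (f a) (f b) \<longleftrightarrow> biclaw_E a b"
      using a b unfolding bv
      apply (elim disjE exE conjE)
      using e esym irr ex ey nxx nyy nxy nyx nxX nyY
      by (simp_all add: f_def biclaw_E_def)
  qed
  have "induced_subgraph_of (biclaw_V t t) biclaw_E V E"
    unfolding induced_subgraph_of_def using inj img edges by blast
  then show False using free by blast
qed

end

lemma cdiff: "finite A \<Longrightarrow> finite B \<Longrightarrow> card A \<le> card (A - B) + card B"
proof -
  assume f: "finite A" "finite B"
  have "card A \<le> card ((A - B) \<union> B)" using f by (intro card_mono) auto
  also have "\<dots> \<le> card (A - B) + card B" by (rule card_Un_le)
  finally show ?thesis .
qed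

lemma card2: "card {a, b} \<le> 2" by (cases "a = b") auto

context bg
begin

lemma Pplus: assumes e: "E x y" and S: "S \<subseteq> N x - {y}" and T: "T \<subseteq> N y - {x}"
  and cT: "card T = t" and k: "\<forall>z\<in>T. card (N z \<inter> S) < k"
  shows "card S < t * k"
proof -
  let ?S0 = "{s \<in> S. \<forall>a\<in>T. \<not> E s a}"
  have "card T < t \<or> card ?S0 < t"
  proof (rule AC[OF e T])
    show "?S0 \<subseteq> N x - {y}" using S by blast
    show "\<forall>a\<in>T. \<forall>b\<in>?S0. \<not> E a b"
    proof (intro ballI notI)
      fix a b assume "a \<in> T" "b \<in> ?S0" "E a b"
      then show False using esym by blast
    qed
  qed
  then have c0: "card ?S0 < t" using cT by simp
  have fT: "finite T" using T finS by blast
  have Tne: "T \<noteq> {}" using cT tpos by auto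
  then obtain z0 where "z0 \<in> T" by blast
  then have k1: "1 \<le> k" using k by fastforce
  have sub: "S \<subseteq> ?S0 \<union> (\<Union>z\<in>T. N z \<inter> S)"
  proof
    fix s assume s: "s \<in> S"
    show "s \<in> ?S0 \<union> (\<Union>z\<in>T. N z \<inter> S)"
    proof (cases "\<forall>a\<in>T. \<not> E s a")
      case True then show ?thesis using s by blast
    next
      case False
      then obtain a where a: "a \<in> T" "E s a" by blast
      then have "s \<in> N a \<inter> S" using s esym eV1 by blast
      then show ?thesis using a by blast
    qed
  qed
  have fS: "finite S" using S finS by blast
  have "card S \<le> card (?S0 \<union> (\<Union>z\<in>T. N z \<inter> S))"
    using sub fS fT finN by (intro card_mono) auto
  also have "\<dots> \<le> card ?S0 + card (\<Union>z\<in>T. N z \<inter> S)" by (rule card_Un_le)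
  also have "card (\<Union>z\<in>T. N z \<inter> S) \<le> (\<Sum>z\<in>T. card (N z \<inter> S))" by (rule card_UN_le[OF fT])
  also have "(\<Sum>z\<in>T. card (N z \<inter> S)) \<le> card T * (k - 1)"
  proof -
    have "\<And>z. z \<in> T \<Longrightarrow> card (N z \<inter> S) \<le> k - 1" using k by fastforce
    then show ?thesis using sum_bounded_above[of T "\<lambda>z. card (N z \<inter> S)" "k - 1"] by simp
  qed
  finally have "card S \<le> card ?S0 + t * (k - 1)" using cT by simp
  then have "card S < t + t * (k - 1)" using c0 by linarith
  also have "t + t * (k - 1) = t * k" using k1 by (cases k) auto
  finally show ?thesis .
qed

lemma FA: assumes r: "r \<in> V" and e: "E x y" and dy: "d r y = Suc (d r x)"
  shows "card (Dn r x) < t \<or> card (Up r y) < t"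
proof -
  have "card (Up r y) < t \<or> card (Dn r x) < t"
  proof (rule AC[OF e])
    show "Up r y \<subseteq> N y - {x}" using dy by auto
    show "Dn r x \<subseteq> N x - {y}" using dy by auto
    show "\<forall>a\<in>Up r y. \<forall>b\<in>Dn r x. \<not> E a b"
    proof (intro ballI notI)
      fix a b assume a: "a \<in> Up r y" and b: "b \<in> Dn r x" and ab: "E a b"
      from L_adj[OF r ab] a b dy show False by auto
    qed
  qed
  then show ?thesis by auto
qed

lemma L_d1: assumes r: "r \<in> V" and e: "E r a" shows "d r a = 1"
  using L_adj[OF r e] L_self[of r] by auto

lemma L_one: assumes r: "r \<in> V" and g: "g \<in> V" and dg: "d r g = 1" shows "E r g"
proof -
  obtain x where x: "x \<in> N g" "d r x = 0" using L_pred[OF r g] dg by auto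
  then have "x = r" using L_zero[OF r] by auto
  then show ?thesis using x esym by auto
qed

lemma L_d2: assumes r: "r \<in> V" and dg: "d r g = 1" and h: "h \<in> N g" and hr: "h \<noteq> r"
  shows "d r h = 2"
proof -
  have "d r h = Suc (d r g) \<or> d r g = Suc (d r h)" using L_adj[OF r, of g h] h by simp
  moreover have "d r h \<noteq> 0" using L_zero[OF r, of h] h hr by auto
  ultimately show ?thesis using dg by auto
qed

lemma H1: assumes r: "r \<in> V" and g: "g \<in> V" and dg: "d r g = 1"
  shows "card {z \<in> N g - {r}. card (Dn r z) < t} < t"
proof (rule ccontr)
  let ?Z = "{z \<in> N g - {r}. card (Dn r z) < t}"
  assume "\<not> card ?Z < t"
  then have "t \<le> card ?Z" by simp
  then obtain T where T: "T \<subseteq> ?Z" "card T = t" "finite T" using obtain_subset_with_card_n by blast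
  have erg: "E r g" using L_one[OF r g dg] .
  have "card (N r - {g}) < t * t"
  proof (rule Pplus[OF erg _ _ T(2)])
    show "N r - {g} \<subseteq> N r - {g}" by simp
    show "T \<subseteq> N g - {r}" using T by auto
    show "\<forall>z\<in>T. card (N z \<inter> (N r - {g})) < t"
    proof
      fix z assume z: "z \<in> T"
      then have zN: "z \<in> N g" "z \<noteq> r" "card (Dn r z) < t" using T by auto
      have dz: "d r z = 2" using L_d2[OF r dg zN(1,2)] .
      have "N z \<inter> (N r - {g}) \<subseteq> Dn r z" using L_d1[OF r] dz by auto
      then have "card (N z \<inter> (N r - {g})) \<le> card (Dn r z)" using finV by (intro card_mono) auto
      then show "card (N z \<inter> (N r - {g})) < t" using zN(3) by simp
    qed
  qed
  moreover have "card (N r) \<le> card (N r - {g}) + card {g}" using cdiff[OF finN] by blast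
  moreover have "C \<le> card (N r)" using deg[OF r] .
  moreover have "t * t \<le> 3 * t * t" by simp
  ultimately show False using Cbig by simp
qed

end

context bg
begin

lemma Cb: "3*(t*t) + 3 \<le> C" using Cbig by (simp add: mult.assoc)
lemma tt: "t \<le> t*t"
proof -
  have "1*t \<le> t*t" using tpos by (intro mult_le_mono1) simp
  then show ?thesis by simp
qed

lemma tt2: "2 * t \<le> t * t + 1"
proof (cases "t = 1")
  case True then show ?thesis by simp
next
  case False
  then have t2: "2 \<le> t" using tpos by linarith
  have "2 * t \<le> t * t" using mult_le_mono1[OF t2, of t] .
  then show ?thesis by linarith
qed

lemma H2: assumes r: "r \<in> V" and s: "s \<in> V" and ds: "d r s = 2"
  shows "card {z \<in> N s. d r z = 3 \<and> t \<le> card (Up r z)} < t"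
proof (rule ccontr)
  let ?Z = "{z \<in> N s. d r z = 3 \<and> t \<le> card (Up r z)}"
  assume "\<not> card ?Z < t"
  then have cZ: "t \<le> card ?Z" by simp
  have ds': "d r s = Suc 1" using ds by simp
  obtain g where g: "g \<in> N s" "d r g = 1" using L_pred[OF r s ds'] by blast
  have gV: "g \<in> V" and egs: "E g s" using g esym by auto
  let ?B = "{z \<in> N g - {r}. card (Dn r z) < t}"
  let ?H = "{h \<in> N g - {r} - {s}. t \<le> card (Dn r h)}"
  have cB: "card ?B < t" using H1[OF r gV g(2)] .
  have "N g \<subseteq> ?H \<union> ?B \<union> {r, s}" by auto
  then have "card (N g) \<le> card (?H \<union> ?B \<union> {r, s})" using finV by (intro card_mono) auto
  also have "\<dots> \<le> card (?H \<union> ?B) + card {r, s}" by (rule card_Un_le)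
  also have "\<dots> \<le> card ?H + card ?B + 2" using card_Un_le[of ?H ?B] card2[of r s] by linarith
  finally have "C \<le> card ?H + card ?B + 2" using deg[OF gV] by linarith
  then have cH: "t \<le> card ?H" using cB Cb tt by linarith
  have "card ?Z < t \<or> card ?H < t"
  proof (rule AC[OF egs])
    show "?Z \<subseteq> N s - {g}" using g(2) by auto
    show "?H \<subseteq> N g - {s}" by auto
    show "\<forall>a\<in>?Z. \<forall>b\<in>?H. \<not> E a b"
    proof (intro ballI notI)
      fix a b assume a: "a \<in> ?Z" and b: "b \<in> ?H" and ab: "E a b"
      have db: "d r b = 2" using L_d2[OF r g(2)] b by auto
      have "card (Dn r b) < t \<or> card (Up r a) < t" using FA[OF r esym[OF ab]] a db by auto
      then show False using a b by auto
    qed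
  qed
  then show False using cZ cH by simp
qed

lemma T6: assumes r1: "r1 \<in> V" and r2: "r2 \<in> V" and d6: "d r1 r2 = 6" and z: "z \<in> V"
  shows "6 \<le> d r1 z + d r2 z"
  using L_tri[OF r1 z r2] L_sym[OF z r2] d6 by simp

lemma adjd: assumes r: "r \<in> V" and a: "a \<in> N z" shows "d r a = Suc (d r z) \<or> d r z = Suc (d r a)"
  using L_adj[OF r, of z a] a by simp

lemma deg33: assumes r1: "r1 \<in> V" and r2: "r2 \<in> V" and d6: "d r1 r2 = 6" and z: "z \<in> V"
  and d1: "d r1 z = 3" and d2: "d r2 z = 3"
  shows "C \<le> card (Up r1 z) + card (Up r2 z)"
proof -
  have "N z \<subseteq> Up r1 z \<union> Up r2 z"
  proof
    fix a assume a: "a \<in> N z"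
    have "6 \<le> d r1 a + d r2 a" using T6[OF r1 r2 d6] a by auto
    then show "a \<in> Up r1 z \<union> Up r2 z" using adjd[OF r1 a] adjd[OF r2 a] d1 d2 a by auto
  qed
  then have "card (N z) \<le> card (Up r1 z \<union> Up r2 z)" using finV by (intro card_mono) auto
  also have "\<dots> \<le> card (Up r1 z) + card (Up r2 z)" by (rule card_Un_le)
  finally show ?thesis using deg[OF z] by linarith
qed

lemma M1: assumes r1: "r1 \<in> V" and r2: "r2 \<in> V" and d6: "d r1 r2 = 6" and y: "y \<in> V"
  and d1: "d r1 y = 3" and d2: "d r2 y = 3" and big: "t \<le> card (Dn r1 y)"
  and q: "q \<in> N y" and dq: "d r2 q = 2"
  shows "card {z \<in> N q - {y}. d r2 z = 3} < 2 * (t * t)"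
proof -
  have qV: "q \<in> V" using q by simp
  have "6 \<le> d r1 q + d r2 q" using T6[OF r1 r2 d6 qV] .
  then have dq1: "d r1 q = 4" using adjd[OF r1 q] d1 dq by auto
  obtain T where T: "T \<subseteq> Dn r1 y" "card T = t" "finite T" using obtain_subset_with_card_n[OF big] by blast
  let ?S = "{z \<in> N q - {y}. d r2 z = 3}"
  have "card ?S < t * (2 * t - 1)"
  proof (rule Pplus[OF esym[of y q] _ _ T(2)])
    show "E y q" using q by simp
    show "?S \<subseteq> N q - {y}" by auto
    show "T \<subseteq> N y - {q}" using T(1) d1 dq1 by auto
    show "\<forall>s\<in>T. card (N s \<inter> ?S) < 2 * t - 1"
    proof
      fix s assume sT: "s \<in> T"
      then have sN: "s \<in> N y" and ds: "d r1 s = 2" using T(1) d1 by auto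
      have sV: "s \<in> V" using sN by simp
      let ?P1 = "{z \<in> N s. d r1 z = 3 \<and> t \<le> card (Up r1 z)}"
      let ?P2 = "{z \<in> N q. d r2 z = 3 \<and> t \<le> card (Up r2 z)}"
      have c1: "card ?P1 < t" using H2[OF r1 sV ds] .
      have c2: "card ?P2 < t" using H2[OF r2 qV dq] .
      have "N s \<inter> ?S \<subseteq> ?P1 \<union> ?P2"
      proof
        fix z assume z: "z \<in> N s \<inter> ?S"
        then have zs: "z \<in> N s" and zq: "z \<in> N q" and dz2: "d r2 z = 3" by auto
        have zV: "z \<in> V" using zs by simp
        have dz1: "d r1 z = 3" using adjd[OF r1 zs] adjd[OF r1 zq] ds dq1 by auto
        show "z \<in> ?P1 \<union> ?P2"
        proof (rule ccontr)
          assume "z \<notin> ?P1 \<union> ?P2"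
          then have "card (Up r1 z) < t" "card (Up r2 z) < t" using zs zq dz1 dz2 by auto
          moreover have "C \<le> card (Up r1 z) + card (Up r2 z)" using deg33[OF r1 r2 d6 zV dz1 dz2] .
          ultimately show False using Cb tt by linarith
        qed
      qed
      then have "card (N s \<inter> ?S) \<le> card (?P1 \<union> ?P2)" using finV by (intro card_mono) auto
      also have "\<dots> \<le> card ?P1 + card ?P2" by (rule card_Un_le)
      finally show "card (N s \<inter> ?S) < 2 * t - 1" using c1 c2 by linarith
    qed
  qed
  also have "t * (2 * t - 1) \<le> t * (2 * t)" by (intro mult_le_mono2) simp
  also have "\<dots> = 2 * (t * t)" by simp
  finally show ?thesis .
qed

lemma M2: assumes r1: "r1 \<in> V" and r2: "r2 \<in> V" and d6: "d r1 r2 = 6" and y: "y \<in> V"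
  and d1: "d r1 y = 3" and d2: "d r2 y = 3" and big: "t \<le> card (Dn r1 y)"
  shows "card (Up r2 y) < t"
proof -
  have d2': "d r2 y = Suc 2" using d2 by simp
  obtain q where q: "q \<in> N y" "d r2 q = 2" using L_pred[OF r2 y d2'] by blast
  have qV: "q \<in> V" using q by simp
  have cS: "card {z \<in> N q - {y}. d r2 z = 3} < 2 * (t * t)" using M1[OF r1 r2 d6 y d1 d2 big q] .
  have "Up r2 q \<subseteq> {z \<in> N q - {y}. d r2 z = 3} \<union> {y}" using q by auto
  then have "card (Up r2 q) \<le> card ({z \<in> N q - {y}. d r2 z = 3} \<union> {y})" using finV by (intro card_mono) auto
  also have "\<dots> \<le> card {z \<in> N q - {y}. d r2 z = 3} + card {y}" by (rule card_Un_le)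
  finally have cU: "card (Up r2 q) \<le> 2 * (t * t)" using cS by simp
  have "C \<le> card (Dn r2 q) + card (Up r2 q)" using L_split[OF r2 qV] .
  then have cD: "t \<le> card (Dn r2 q)" using cU Cb tt by linarith
  have "d r2 y = Suc (d r2 q)" using q d2 by simp
  then have "card (Dn r2 q) < t \<or> card (Up r2 y) < t" using FA[OF r2 esym[of y q]] q by auto
  then show ?thesis using cD by simp
qed

lemma Mm: assumes r1: "r1 \<in> V" and r2: "r2 \<in> V" and d6: "d r1 r2 = 6" and y: "y \<in> V"
  and d1: "d r1 y = 3" and d2: "d r2 y = 3"
  shows "card (Dn r1 y) < t"
proof (rule ccontr)
  assume "\<not> card (Dn r1 y) < t"
  then have big: "t \<le> card (Dn r1 y)" by simp
  have u2: "card (Up r2 y) < t" using M2[OF r1 r2 d6 y d1 d2 big] .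
  have "C \<le> card (Dn r2 y) + card (Up r2 y)" using L_split[OF r2 y] .
  then have big2: "t \<le> card (Dn r2 y)" using u2 Cb tt by linarith
  have d6': "d r2 r1 = 6" using L_sym[OF r1 r2] d6 by simp
  have u1: "card (Up r1 y) < t" using M2[OF r2 r1 d6' y d2 d1 big2] .
  have "C \<le> card (Up r1 y) + card (Up r2 y)" using deg33[OF r1 r2 d6 y d1 d2] .
  then show False using u1 u2 Cb tt by linarith
qed

end

context bg
begin

lemma no6: assumes r1: "r1 \<in> V" and r2: "r2 \<in> V" and d6: "d r1 r2 = 6"
  shows False
proof -
  have d6': "d r2 r1 = 6" using L_sym[OF r1 r2] d6 by simp
  have "d r1 r2 = 3 + 3" using d6 by simp
  then obtain y where y: "y \<in> V" "d r1 y = 3" "rch E 3 y r2" using L_desc[OF r1 r2] by blast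
  have "d y r2 \<le> 3" using L_le[OF y(3)] .
  then have "d r2 y \<le> 3" using L_sym[OF y(1) r2] by simp
  moreover have "6 \<le> d r1 y + d r2 y" using T6[OF r1 r2 d6 y(1)] .
  ultimately have dy2: "d r2 y = 3" using y(2) by simp
  note dy1 = y(2)
  have m1: "card (Dn r1 y) < t" using Mm[OF r1 r2 d6 y(1) dy1 dy2] .
  have m2: "card (Dn r2 y) < t" using Mm[OF r2 r1 d6' y(1) dy2 dy1] .
  have "d r1 y = Suc 2" using dy1 by simp
  then obtain s where s: "s \<in> N y" "d r1 s = 2" using L_pred[OF r1 y(1)] by blast
  have sV: "s \<in> V" using s by simp
  have "6 \<le> d r1 s + d r2 s" using T6[OF r1 r2 d6 sV] .
  then have ds2: "d r2 s = 4" using adjd[OF r2 s(1)] dy2 s(2) by auto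
  have "d r2 y = Suc 2" using dy2 by simp
  then obtain q where q: "q \<in> N y" "d r2 q = 2" using L_pred[OF r2 y(1)] by blast
  have qV: "q \<in> V" using q by simp
  have "6 \<le> d r1 q + d r2 q" using T6[OF r1 r2 d6 qV] .
  then have dq1: "d r1 q = 4" using adjd[OF r1 q(1)] dy1 q(2) by auto
  have eqy: "E q y" using q esym by auto
  have F1: "card (Dn r2 q) < t"
  proof (rule ccontr)
    assume "\<not> card (Dn r2 q) < t"
    then have "card (Up r2 y) < t" using FA[OF r2 eqy] q dy2 by auto
    moreover have "C \<le> card (Dn r2 y) + card (Up r2 y)" using L_split[OF r2 y(1)] .
    ultimately show False using m2 Cb tt by linarith
  qed
  have cUq: "C \<le> card (Dn r2 q) + card (Up r2 q)" using L_split[OF r2 qV] .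
  let ?W = "{z \<in> N q - {y}. d r2 z = 3 \<and> card (Up r2 z) < t}"
  let ?B2 = "{z \<in> N q. d r2 z = 3 \<and> t \<le> card (Up r2 z)}"
  have cB2: "card ?B2 < t" using H2[OF r2 qV q(2)] .
  have "Up r2 q \<subseteq> ?W \<union> ?B2 \<union> {y}" using q by auto
  then have "card (Up r2 q) \<le> card (?W \<union> ?B2 \<union> {y})" using finV by (intro card_mono) auto
  also have "\<dots> \<le> card (?W \<union> ?B2) + card {y}" by (rule card_Un_le)
  also have "\<dots> \<le> card ?W + card ?B2 + 1" using card_Un_le[of ?W ?B2] by simp
  finally have cW: "t \<le> card ?W" using cUq F1 cB2 Cb tt by linarith
  let ?Z = "{z \<in> N y. d r2 z = 4 \<and> t \<le> card (Up r2 z)}"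
  have "card ?W < t \<or> card ?Z < t"
  proof (rule AC[of y q])
    show "E y q" using q by simp
    show "?W \<subseteq> N q - {y}" by auto
    show "?Z \<subseteq> N y - {q}" using q by auto
    show "\<forall>a\<in>?W. \<forall>b\<in>?Z. \<not> E a b"
    proof (intro ballI notI)
      fix a b assume a: "a \<in> ?W" and b: "b \<in> ?Z" and ab: "E a b"
      have aV: "a \<in> V" using a by simp
      have "card (Dn r2 a) < t \<or> card (Up r2 b) < t" using FA[OF r2 ab] a b by auto
      moreover have "C \<le> card (Dn r2 a) + card (Up r2 a)" using L_split[OF r2 aV] .
      moreover have "card (Up r2 a) < t" using a by blast
      moreover have "t \<le> card (Up r2 b)" using b by blast
      ultimately show False using Cb tt by linarith
    qed
  qed
  then have cZ: "card ?Z < t" using cW by simp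
  let ?R = "{z \<in> N y. d r1 z = 4 \<and> d r2 z = 4 \<and> card (Up r2 z) < t}"
  have "N y \<subseteq> Dn r1 y \<union> Dn r2 y \<union> ?Z \<union> ?R"
  proof
    fix a assume a: "a \<in> N y"
    show "a \<in> Dn r1 y \<union> Dn r2 y \<union> ?Z \<union> ?R"
      using adjd[OF r1 a] adjd[OF r2 a] dy1 dy2 a by auto
  qed
  then have "card (N y) \<le> card (Dn r1 y \<union> Dn r2 y \<union> ?Z \<union> ?R)" using finV by (intro card_mono) auto
  also have "\<dots> \<le> card (Dn r1 y) + card (Dn r2 y) + card ?Z + card ?R"
    using card_Un_le[of "Dn r1 y \<union> Dn r2 y \<union> ?Z" ?R] card_Un_le[of "Dn r1 y \<union> Dn r2 y" ?Z]
      card_Un_le[of "Dn r1 y" "Dn r2 y"] by linarith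
  finally have cR0: "card (N y) \<le> card (Dn r1 y) + card (Dn r2 y) + card ?Z + card ?R" .
  have c3: "card (Dn r1 y) + card (Dn r2 y) + card ?Z \<le> 3 * t" using m1 m2 cZ by linarith
  have "C \<le> card (N y)" using deg[OF y(1)] .
  then have "C \<le> 3 * t + card ?R" using cR0 c3 by linarith
  moreover have "3 * t \<le> 3 * (t * t)" using tt by simp
  ultimately have cR: "t \<le> card ?R" using Cb tt tt2 by linarith
  obtain T where T: "T \<subseteq> ?R" "card T = t" "finite T" using obtain_subset_with_card_n[OF cR] by blast
  let ?S = "{a \<in> N s. d r1 a = 1 \<or> d r2 a = 5}"
  have cS: "card ?S < t * t"
  proof (rule Pplus[OF _ _ _ T(2)])
    show "E s y" using s esym by auto
    show "?S \<subseteq> N s - {y}" using dy1 dy2 by auto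
    show "T \<subseteq> N y - {s}" using T(1) s(2) by auto
    show "\<forall>z\<in>T. card (N z \<inter> ?S) < t"
    proof
      fix z assume zT: "z \<in> T"
      then have zR: "z \<in> ?R" using T(1) by blast
      have "N z \<inter> ?S \<subseteq> Up r2 z"
      proof
        fix a assume a: "a \<in> N z \<inter> ?S"
        then have aN: "a \<in> N z" by simp
        show "a \<in> Up r2 z" using adjd[OF r1 aN] zR a by auto
      qed
      then have "card (N z \<inter> ?S) \<le> card (Up r2 z)" using finV by (intro card_mono) auto
      moreover have "card (Up r2 z) < t" using zR by blast
      ultimately show "card (N z \<inter> ?S) < t" by linarith
    qed
  qed
  let ?G = "{a \<in> N s. d r1 a = 3 \<and> d r2 a = 3}"
  have "N s \<subseteq> ?S \<union> ?G"
  proof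
    fix a assume a: "a \<in> N s"
    show "a \<in> ?S \<union> ?G" using adjd[OF r1 a] adjd[OF r2 a] s(2) ds2 a by auto
  qed
  then have "card (N s) \<le> card (?S \<union> ?G)" using finV by (intro card_mono) auto
  also have "\<dots> \<le> card ?S + card ?G" by (rule card_Un_le)
  finally have cG: "C \<le> card ?S + card ?G" using deg[OF sV] by linarith
  let ?P1 = "{z \<in> N s. d r1 z = 3 \<and> t \<le> card (Up r1 z)}"
  have cP1: "card ?P1 < t" using H2[OF r1 sV s(2)] .
  have "\<not> ?G \<subseteq> ?P1"
  proof
    assume "?G \<subseteq> ?P1"
    then have "card ?G \<le> card ?P1" using finV by (intro card_mono) auto
    then show False using cG cS cP1 Cb tt by linarith
  qed
  then obtain z where z: "z \<in> ?G" "z \<notin> ?P1" by blast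
  have zV: "z \<in> V" using z by simp
  have dz: "d r1 z = 3" "d r2 z = 3" using z by auto
  have "card (Up r1 z) < t" using z by auto
  moreover have "C \<le> card (Dn r1 z) + card (Up r1 z)" using L_split[OF r1 zV] .
  moreover have "card (Dn r1 z) < t" using Mm[OF r1 r2 d6 zV dz] .
  ultimately show False using Cb tt by linarith
qed

end

theorem mainTheorem8:
  shows "\<exists>C5 :: nat \<Rightarrow> nat. \<forall>t::nat. t > 0 \<longrightarrow>
    (\<forall>(V :: nat set) E. simple_graph V E \<and> connected_graph V E \<and> bipartite V E
       \<and> min_degree_ge V E (C5 t) \<and> induced_biclaw_free t V E
       \<longrightarrow> diameter_le V E 5)"
proof (intro exI allI impI)
  fix t :: nat and V :: "nat set" and E
  assume t: "t > 0"
  assume H: "simple_graph V E \<and> connected_graph V E \<and> bipartite V E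
       \<and> min_degree_ge V E (3*t*t+3) \<and> induced_biclaw_free t V E"
  obtain A where A: "A \<subseteq> V" "\<forall>u v. E u v \<longrightarrow> (u \<in> A \<longleftrightarrow> v \<notin> A)" using H unfolding bipartite_def by blast
  have conn: "\<And>a b. a \<in> V \<Longrightarrow> b \<in> V \<Longrightarrow> \<exists>n. rch E n a b"
  proof -
    fix a b assume "a \<in> V" "b \<in> V"
    then obtain ps where "is_walk E ps a b" using H unfolding connected_graph_def by blast
    then show "\<exists>n. rch E n a b" using walk_rch[of E ps a b] by blast
  qed
  interpret bg V E A t "3*t*t+3"
  proof
    show "simple_graph V E" using H by blast
    show "\<And>a b. E a b \<Longrightarrow> (a \<in> A) = (b \<notin> A)" using A by blast
    show "\<And>v. v \<in> V \<Longrightarrow> 3*t*t+3 \<le> card {a \<in> V. E v a}"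
      using H unfolding min_degree_ge_def degree_def by blast
    show "\<not> induced_subgraph_of (biclaw_V t t) biclaw_E V E"
      using H unfolding induced_biclaw_free_def by blast
    show "\<And>a b. a \<in> V \<Longrightarrow> b \<in> V \<Longrightarrow> \<exists>n. rch E n a b" using conn by blast
    show "1 \<le> t" using t by simp
    show "3*t*t+3 \<le> 3*t*t+3" by simp
  qed
  show "diameter_le V E 5"
    unfolding diameter_le_def
  proof (intro ballI)
    fix a b assume a: "a \<in> V" and b: "b \<in> V"
    show "\<exists>ps. is_walk E ps a b \<and> length ps \<le> Suc 5"
    proof (rule ccontr)
      assume no: "\<not> (\<exists>ps. is_walk E ps a b \<and> length ps \<le> Suc 5)"
      obtain ps where ps: "is_walk E ps a b" "length ps = Suc (d a b)"
        using rch_walk[OF L_rch[OF a b]] by blast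
      then have "6 \<le> d a b" using no by fastforce
      then obtain k where "d a b = 6 + k" using le_Suc_ex by blast
      then obtain w where w: "w \<in> V" "d a w = 6" "rch E k w b" using L_desc[OF a b] by blast
      show False using no6[OF a w(1) w(2)] .
    qed
  qed
qed

end
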